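(* Let $\Omega\subset\mathbb{R}^2$ be open, $\lambda>0$, and let $u\in L^2(\Omega)$ satisfy $-\Delta u=\lambda u$ in $\Omega$. Let $\mathbf{x}_0\in\Omega$, $h>0$, and let $\mathbf{e}^-,\mathbf{e}^+$ be unit vectors with angle $\alpha\pi$ from $\mathbf{e}^-$ to $\mathbf{e}^+$, where $\alpha\in(0,2)$ is irrational; put $\Gamma^\pm=\{\mathbf{x}_0+t\mathbf{e}^\pm:0\le t\le h\}\subset\Omega$. Suppose $\Gamma^-$ is a generalized singular line of $u$ with constant parameter $\eta_1\equiv C_1$ and $\Gamma^+$ is a nodal line of $u$ ($u=0$ on $\Gamma^+$). Then $\mathrm{Vani}(u;\mathbf{x}_0)=+\infty$.
   Context: No boundary condition is imposed on $\partial\Omega$; $u$ is real-analytic in $\Omega$. A generalized singular line with parameter $\eta$ (not identically zero; here a nonzero complex constant) is a segment $\Gamma$ on which $\partial_\nu u+\eta u=0$, $\nu$ a unit normal to $\Gamma$. $\mathrm{Vani}(u;\mathbf{x}_0)$ is the smallest degree of a nonzero homogeneous term in the Taylor expansion of $u$ at $\mathbf{x}_0$ ($+\infty$ if all vanish). *)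

theory Defs
  imports "HOL-Analysis.Analysis" "HOL-Library.Extended_Nat"
begin

definition pdx :: "(real \<times> real \<Rightarrow> complex) \<Rightarrow> real \<times> real \<Rightarrow> complex" where
  "pdx f p = vector_derivative (\<lambda>t. f (t, snd p)) (at (fst p))"

definition pdy :: "(real \<times> real \<Rightarrow> complex) \<Rightarrow> real \<times> real \<Rightarrow> complex" where
  "pdy f p = vector_derivative (\<lambda>t. f (fst p, t)) (at (snd p))"

text \<open>Iterated partial derivatives: True = d/dx, False = d/dy (applied right to left).\<close>
fun dops :: "bool list \<Rightarrow> (real \<times> real \<Rightarrow> complex) \<Rightarrow> real \<times> real \<Rightarrow> complex" where
  "dops [] f = f"
| "dops (b # bs) f = (if b then pdx else pdy) (dops bs f)"

definition smooth2_on :: "(real \<times> real) set \<Rightarrow> (real \<times> real \<Rightarrow> complex) \<Rightarrow> bool" where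
  "smooth2_on \<Omega> u \<longleftrightarrow> (\<forall>bs. continuous_on \<Omega> (dops bs u) \<and>
     (\<forall>p\<in>\<Omega>. (\<lambda>t. dops bs u (t, snd p)) differentiable (at (fst p)) \<and>
              (\<lambda>t. dops bs u (fst p, t)) differentiable (at (snd p))))"

definition laplacian :: "(real \<times> real \<Rightarrow> complex) \<Rightarrow> real \<times> real \<Rightarrow> complex" where
  "laplacian u p = pdx (pdx u) p + pdy (pdy u) p"

text \<open>Homogeneous term of degree N of the Taylor expansion of u at x0
  (as a function of the displacement (x,y)).\<close>
definition taylor_hterm :: "(real \<times> real \<Rightarrow> complex) \<Rightarrow> real \<times> real \<Rightarrow> nat \<Rightarrow> real \<times> real \<Rightarrow> complex" where
  "taylor_hterm u x0 N = (\<lambda>(x, y). \<Sum>j\<le>N.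
      dops (replicate j True @ replicate (N - j) False) u x0
        / of_real (fact j * fact (N - j)) * of_real (x ^ j * y ^ (N - j)))"

definition Vani :: "(real \<times> real \<Rightarrow> complex) \<Rightarrow> real \<times> real \<Rightarrow> enat" where
  "Vani u x0 = (if \<exists>N. taylor_hterm u x0 N \<noteq> (\<lambda>_. 0)
                then enat (LEAST N. taylor_hterm u x0 N \<noteq> (\<lambda>_. 0)) else \<infinity>)"

definition rot90 :: "real \<times> real \<Rightarrow> real \<times> real" where
  "rot90 e = (- snd e, fst e)"

definition rotate :: "real \<Rightarrow> real \<times> real \<Rightarrow> real \<times> real" where
  "rotate \<theta> e = (cos \<theta> * fst e - sin \<theta> * snd e, sin \<theta> * fst e + cos \<theta> * snd e)"

definition segment_from :: "real \<times> real \<Rightarrow> real \<times> real \<Rightarrow> real \<Rightarrow> (real \<times> real) set" where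
  "segment_from x0 e h = {x0 + t *\<^sub>R e | t. 0 \<le> t \<and> t \<le> h}"

definition normal_deriv :: "real \<times> real \<Rightarrow> (real \<times> real \<Rightarrow> complex) \<Rightarrow> real \<times> real \<Rightarrow> complex" where
  "normal_deriv \<nu> u p = of_real (fst \<nu>) * pdx u p + of_real (snd \<nu>) * pdy u p"

definition gen_singular_line ::
  "(real \<times> real \<Rightarrow> complex) \<Rightarrow> (real \<times> real) set \<Rightarrow> real \<times> real \<Rightarrow> (real \<times> real \<Rightarrow> complex) \<Rightarrow> bool" where
  "gen_singular_line u \<Gamma> \<nu> \<eta> \<longleftrightarrow> (\<forall>p\<in>\<Gamma>. normal_deriv \<nu> u p + \<eta> p * u p = 0)"

end

theory Submission
  imports Defs
begin


lemma tri3: "norm (p - q) \<le> norm (p - r) + norm (q - (r::'a::real_normed_vector))"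
proof -
  have "p - q = (p - r) - (q - r)" by simp
  then show ?thesis by (metis norm_triangle_ineq4)
qed

lemma tri4: "norm (p - q) \<le> norm (p - r) + norm (r - (q::'a::real_normed_vector))"
proof -
  have "p - q = (p - r) + (r - q)" by simp
  then show ?thesis by (metis norm_triangle_ineq)
qed

lemma clairaut_half:
  fixes g gx gxy :: "real \<Rightarrow> real \<Rightarrow> complex"
  assumes d: "d > 0" "e \<ge> 0"
   and dx: "\<And>x y. \<bar>x-a\<bar> < d \<Longrightarrow> \<bar>y-b\<bar> < d \<Longrightarrow> ((\<lambda>t. g t y) has_vector_derivative gx x y) (at x)"
   and dxy: "\<And>x y. \<bar>x-a\<bar> < d \<Longrightarrow> \<bar>y-b\<bar> < d \<Longrightarrow> ((\<lambda>t. gx x t) has_vector_derivative gxy x y) (at y)"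
   and cont: "\<And>x y. \<bar>x-a\<bar> < d \<Longrightarrow> \<bar>y-b\<bar> < d \<Longrightarrow> norm (gxy x y - gxy a b) \<le> e"
   and s: "0 < s" "s < d"
  shows "norm (g (a+s) (b+s) - g (a+s) b - g a (b+s) + g a b - (s * s) *\<^sub>R gxy a b) \<le> 9*e*(s * s)"
proof -
  have step1: "norm (gx x (b+s) - gx x b - s *\<^sub>R gxy a b) \<le> 3*e * s" if x: "\<bar>x-a\<bar> < d" for x
  proof -
    have "norm (gx x (b+s) - gx x b - ((b+s) - b) *\<^sub>R gxy x b) \<le> norm ((b+s) - b) * (2*e)"
    proof (rule vector_differentiable_bound_linearization[where S="{b..b+s}" and f="gx x" and f'="gxy x"])
      fix y assume "y \<in> {b..b+s}"
      then have y: "\<bar>y-b\<bar> < d" using s by auto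
      show "(gx x has_vector_derivative gxy x y) (at y within {b..b+s})"
        using dxy[OF x y] by (rule has_vector_derivative_at_within)
      have "norm (gxy x y - gxy x b) \<le> norm (gxy x y - gxy a b) + norm (gxy x b - gxy a b)"
        by (rule tri3)
      also have "\<dots> \<le> 2*e" using cont[OF x y] cont[OF x, of b] d by simp
      finally show "norm (gxy x y - gxy x b) \<le> 2*e" .
    next
      show "closed_segment b (b + s) \<subseteq> {b..b + s}" using s by (simp add: closed_segment_eq_real_ivl)
      show "b \<in> {b..b+s}" using s by simp
    qed
    then have A: "norm (gx x (b+s) - gx x b - s *\<^sub>R gxy x b) \<le> s * (2*e)" using s by simp
    have B: "norm (s *\<^sub>R gxy x b - s *\<^sub>R gxy a b) \<le> s * e"
    proof -
      have "norm (s *\<^sub>R gxy x b - s *\<^sub>R gxy a b) = s * norm (gxy x b - gxy a b)"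
        using s by (simp flip: scaleR_diff_right)
      also have "\<dots> \<le> s * e" using cont[OF x, of b] d s by (intro mult_left_mono) auto
      finally show ?thesis .
    qed
    have "norm (gx x (b+s) - gx x b - s *\<^sub>R gxy a b) \<le> norm (gx x (b+s) - gx x b - s *\<^sub>R gxy x b) + norm (s *\<^sub>R gxy x b - s *\<^sub>R gxy a b)"
      by (rule tri4)
    moreover have "s * (2*e) + s * e = 3*e * s" by (simp add: algebra_simps)
    ultimately show ?thesis using A B by linarith
  qed
  define \<phi> where "\<phi> x = g x (b+s) - g x b" for x
  define \<phi>' where "\<phi>' x = gx x (b+s) - gx x b" for x
  have "norm (\<phi> (a+s) - \<phi> a - ((a+s) - a) *\<^sub>R \<phi>' a) \<le> norm ((a+s) - a) * (6*e * s)"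
  proof (rule vector_differentiable_bound_linearization[where S="{a..a+s}" and f="\<phi>" and f'="\<phi>'"])
    fix x assume "x \<in> {a..a+s}"
    then have x: "\<bar>x-a\<bar> < d" using s by auto
    have yb: "\<bar>(b+s)-b\<bar> < d" "\<bar>b-b\<bar> < d" using s d by auto
    show "(\<phi> has_vector_derivative \<phi>' x) (at x within {a..a+s})"
      unfolding \<phi>_def[abs_def] \<phi>'_def
      by (rule has_vector_derivative_at_within, intro has_vector_derivative_diff dx[OF x yb(1)] dx[OF x yb(2)])
    have "norm (\<phi>' x - \<phi>' a) \<le> norm (\<phi>' x - s *\<^sub>R gxy a b) + norm (\<phi>' a - s *\<^sub>R gxy a b)"
      by (rule tri3)
    also have "\<dots> \<le> 6*e * s" using step1[OF x] step1[of a] d unfolding \<phi>'_def by simp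
    finally show "norm (\<phi>' x - \<phi>' a) \<le> 6*e * s" .
  next
    show "closed_segment a (a + s) \<subseteq> {a..a + s}" using s by (simp add: closed_segment_eq_real_ivl)
    show "a \<in> {a..a+s}" using s by simp
  qed
  then have A: "norm (\<phi> (a+s) - \<phi> a - s *\<^sub>R \<phi>' a) \<le> s * (6*e * s)" using s by simp
  have B: "norm (s *\<^sub>R \<phi>' a - (s * s) *\<^sub>R gxy a b) \<le> s * (3*e * s)"
  proof -
    have "norm (s *\<^sub>R \<phi>' a - (s * s) *\<^sub>R gxy a b) = s * norm (\<phi>' a - s *\<^sub>R gxy a b)"
    proof -
      have "(s * s) *\<^sub>R gxy a b = s *\<^sub>R (s *\<^sub>R gxy a b)" by simp
      then have "s *\<^sub>R \<phi>' a - (s * s) *\<^sub>R gxy a b = s *\<^sub>R (\<phi>' a - s *\<^sub>R gxy a b)"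
        by (simp add: scaleR_diff_right)
      then show ?thesis using s by simp
    qed
    also have "\<dots> \<le> s * (3*e * s)" using step1[of a] d s unfolding \<phi>'_def by (intro mult_left_mono) auto
    finally show ?thesis .
  qed
  have "norm (\<phi> (a+s) - \<phi> a - (s * s) *\<^sub>R gxy a b) \<le> norm (\<phi> (a+s) - \<phi> a - s *\<^sub>R \<phi>' a) + norm (s *\<^sub>R \<phi>' a - (s * s) *\<^sub>R gxy a b)"
    by (rule tri4)
  also have "\<dots> \<le> 9*e*(s * s)"
  proof -
    have "s * (6*e * s) + s * (3*e * s) = 9*e*(s * s)" by (simp add: algebra_simps)
    then show ?thesis using A B by linarith
  qed
  moreover have "\<phi> (a+s) - \<phi> a - (s * s) *\<^sub>R gxy a b = g (a+s) (b+s) - g (a+s) b - g a (b+s) + g a b - (s * s) *\<^sub>R gxy a b"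
    unfolding \<phi>_def by (simp add: algebra_simps)
  ultimately show ?thesis by simp
qed



lemma box_dist:
  fixes x y a b d :: real
  assumes "\<bar>x-a\<bar> < d" "\<bar>y-b\<bar> < d"
  shows "dist (x,y) (a,b) < 2*d"
proof -
  have "dist (x,y) (a,b) = sqrt ((x-a)^2 + (y-b)^2)" by (simp add: dist_Pair_Pair dist_real_def)
  also have "\<dots> \<le> \<bar>x-a\<bar> + \<bar>y-b\<bar>" by (rule sqrt_sum_squares_le_sum_abs)
  finally show ?thesis using assms by linarith
qed

lemma clairaut:
  fixes G Gx Gy Gxy Gyx :: "real\<times>real \<Rightarrow> complex"
  assumes om: "open \<Omega>" "p \<in> \<Omega>"
   and dx: "\<And>q. q\<in>\<Omega> \<Longrightarrow> ((\<lambda>t. G (t, snd q)) has_vector_derivative Gx q) (at (fst q))"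
   and dy: "\<And>q. q\<in>\<Omega> \<Longrightarrow> ((\<lambda>t. G (fst q, t)) has_vector_derivative Gy q) (at (snd q))"
   and dxy: "\<And>q. q\<in>\<Omega> \<Longrightarrow> ((\<lambda>t. Gx (fst q, t)) has_vector_derivative Gxy q) (at (snd q))"
   and dyx: "\<And>q. q\<in>\<Omega> \<Longrightarrow> ((\<lambda>t. Gy (t, snd q)) has_vector_derivative Gyx q) (at (fst q))"
   and c1: "continuous_on \<Omega> Gxy" and c2: "continuous_on \<Omega> Gyx"
  shows "Gxy p = Gyx p"
proof -
  obtain a b where p: "p = (a,b)" by (cases p)
  have bound: "norm (Gxy p - Gyx p) \<le> 18*e" if e: "e > 0" for e
  proof -
    obtain r0 where r0: "r0 > 0" "ball p r0 \<subseteq> \<Omega>" using om open_contains_ball by blast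
    obtain r1 where r1: "r1 > 0" "\<And>q. q \<in> \<Omega> \<Longrightarrow> dist q p < r1 \<Longrightarrow> dist (Gxy q) (Gxy p) < e"
      using c1 om(2) e unfolding continuous_on_iff by metis
    obtain r2 where r2: "r2 > 0" "\<And>q. q \<in> \<Omega> \<Longrightarrow> dist q p < r2 \<Longrightarrow> dist (Gyx q) (Gyx p) < e"
      using c2 om(2) e unfolding continuous_on_iff by metis
    define d where "d = min r0 (min r1 r2) / 2"
    have d: "d > 0" using r0 r1 r2 by (simp add: d_def)
    have inbox: "(x,y) \<in> \<Omega> \<and> norm (Gxy (x,y) - Gxy p) \<le> e \<and> norm (Gyx (x,y) - Gyx p) \<le> e"
      if "\<bar>x-a\<bar> < d" "\<bar>y-b\<bar> < d" for x y
    proof -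
      have dd: "dist (x,y) p < 2*d" using box_dist[OF that] p by simp
      then have "(x,y) \<in> \<Omega>" using r0 d_def by (auto simp: dist_commute)
      moreover have "dist (Gxy (x,y)) (Gxy p) < e" using r1(2)[OF \<open>(x,y)\<in>\<Omega>\<close>] dd d_def by auto
      moreover have "dist (Gyx (x,y)) (Gyx p) < e" using r2(2)[OF \<open>(x,y)\<in>\<Omega>\<close>] dd d_def by auto
      ultimately show ?thesis by (simp add: dist_norm)
    qed
    define s where "s = d/2"
    have s: "0 < s" "s < d" using d by (auto simp: s_def)
    have H1: "norm (G (a+s,b+s) - G (a+s,b) - G (a,b+s) + G (a,b) - (s * s) *\<^sub>R Gxy (a,b)) \<le> 9*e*(s * s)"
    proof (rule clairaut_half[where g="\<lambda>x y. G (x,y)" and gx="\<lambda>x y. Gx (x,y)" and gxy="\<lambda>x y. Gxy (x,y)" and d=d, OF d])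
      show "0 \<le> e" using e by simp
      fix x y assume xy: "\<bar>x-a\<bar> < d" "\<bar>y-b\<bar> < d"
      note ib = inbox[OF xy]
      show "((\<lambda>t. G (t, y)) has_vector_derivative Gx (x, y)) (at x)" using dx[of "(x,y)"] ib by simp
      show "((\<lambda>t. Gx (x, t)) has_vector_derivative Gxy (x, y)) (at y)" using dxy[of "(x,y)"] ib by simp
      show "norm (Gxy (x, y) - Gxy (a, b)) \<le> e" using ib p by simp
    qed (use s in auto)
    have H2: "norm (G (a+s,b+s) - G (a,b+s) - G (a+s,b) + G (a,b) - (s * s) *\<^sub>R Gyx (a,b)) \<le> 9*e*(s * s)"
    proof (rule clairaut_half[where g="\<lambda>x y. G (y,x)" and gx="\<lambda>x y. Gy (y,x)" and gxy="\<lambda>x y. Gyx (y,x)" and d=d and a=b and b=a, OF d])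
      show "0 \<le> e" using e by simp
      fix x y assume xy: "\<bar>x-b\<bar> < d" "\<bar>y-a\<bar> < d"
      note ib = inbox[OF xy(2,1)]
      show "((\<lambda>t. G (y, t)) has_vector_derivative Gy (y, x)) (at x)" using dy[of "(y,x)"] ib by simp
      show "((\<lambda>t. Gy (t, x)) has_vector_derivative Gyx (y, x)) (at y)" using dyx[of "(y,x)"] ib by simp
      show "norm (Gyx (y, x) - Gyx (a, b)) \<le> e" using ib p by simp
    qed (use s in auto)
    have eq: "(s * s) *\<^sub>R (Gxy p - Gyx p) =
      (G (a+s,b+s) - G (a,b+s) - G (a+s,b) + G (a,b) - (s * s) *\<^sub>R Gyx (a,b))
      - (G (a+s,b+s) - G (a+s,b) - G (a,b+s) + G (a,b) - (s * s) *\<^sub>R Gxy (a,b))"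
      using p by (simp add: scaleR_diff_right)
    have "norm ((s * s) *\<^sub>R (Gxy p - Gyx p)) \<le> 9*e*(s * s) + 9*e*(s * s)"
      unfolding eq by (rule order_trans[OF norm_triangle_ineq4 add_mono[OF H2 H1]])
    moreover have "norm ((s * s) *\<^sub>R (Gxy p - Gyx p)) = (s * s) * norm (Gxy p - Gyx p)"
      by (simp only: norm_scaleR) simp
    ultimately have "(s * s) * norm (Gxy p - Gyx p) \<le> (s * s) * (18*e)" by (simp add: algebra_simps)
    then show ?thesis using s by (simp add: mult_le_cancel_left_pos)
  qed
  have "norm (Gxy p - Gyx p) = 0"
  proof (rule ccontr)
    assume "norm (Gxy p - Gyx p) \<noteq> 0"
    then have pos: "norm (Gxy p - Gyx p) > 0" by simp
    have "norm (Gxy p - Gyx p) \<le> 18 * (norm (Gxy p - Gyx p) / 36)" using bound[of "norm (Gxy p - Gyx p) / 36"] pos by linarith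
    then show False using pos by simp
  qed
  then show ?thesis by simp
qed



lemma frechet2:
  fixes G Gx Gy :: "real\<times>real \<Rightarrow> complex"
  assumes om: "open \<Omega>" "p \<in> \<Omega>"
   and dx: "\<And>q. q\<in>\<Omega> \<Longrightarrow> ((\<lambda>t. G (t, snd q)) has_vector_derivative Gx q) (at (fst q))"
   and dy: "\<And>q. q\<in>\<Omega> \<Longrightarrow> ((\<lambda>t. G (fst q, t)) has_vector_derivative Gy q) (at (snd q))"
   and cy: "continuous_on \<Omega> Gy"
  shows "(G has_derivative (\<lambda>v. fst v *\<^sub>R Gx p + snd v *\<^sub>R Gy p)) (at p)"
proof -
  obtain a b where p: "p = (a,b)" by (cases p)
  obtain r0 where r0: "r0 > 0" "ball p r0 \<subseteq> \<Omega>" using om open_contains_ball by blast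
  define r where "r = r0 / 2"
  have r: "r > 0" using r0 by (simp add: r_def)
  have sub: "ball a r \<times> ball b r \<subseteq> \<Omega>"
  proof
    fix q assume "q \<in> ball a r \<times> ball b r"
    then obtain x y where q: "q = (x,y)" "\<bar>x-a\<bar> < r" "\<bar>y-b\<bar> < r"
      by (auto simp: dist_real_def abs_minus_commute)
    have "dist (x,y) (a,b) < 2*r" by (rule box_dist) (use q in auto)
    then show "q \<in> \<Omega>" using r0 q p by (auto simp: r_def dist_commute)
  qed
  have opn: "open (ball a r \<times> ball b r)" by (simp add: open_Times)
  have pin: "(a,b) \<in> ball a r \<times> ball b r" using r by simp
  have "((\<lambda>(x,y). G (x,y)) has_derivative (\<lambda>(tx, ty). tx *\<^sub>R Gx p + blinfun_apply (blinfun_scaleR_left (Gy (a,b))) ty))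
          (at (a, b) within ball a r \<times> ball b r)"
  proof (rule has_derivative_partialsI[where f="\<lambda>x y. G (x,y)" and fy="\<lambda>x y. blinfun_scaleR_left (Gy (x,y))"])
    show "((\<lambda>x. G (x, b)) has_derivative (\<lambda>tx. tx *\<^sub>R Gx p)) (at a within ball a r)"
      using dx[OF om(2)] p unfolding has_vector_derivative_def by (auto intro: has_derivative_at_withinI)
    fix x y assume xy: "x \<in> ball a r" "y \<in> ball b r"
    then have "(x,y) \<in> \<Omega>" using sub by auto
    then show "((\<lambda>y. G (x, y)) has_derivative blinfun_apply (blinfun_scaleR_left (Gy (x, y)))) (at y within ball b r)"
      using dy[of "(x,y)"] unfolding has_vector_derivative_eq_has_derivative_blinfun[symmetric]
      by (auto intro: has_vector_derivative_at_within)
  next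
    have "continuous (at (a,b)) Gy" using cy om p by (simp add: continuous_on_eq_continuous_at)
    then have "continuous (at (a,b) within ball a r \<times> ball b r) (\<lambda>q. blinfun_scaleR_left (Gy q))"
      by (rule continuous_at_imp_continuous_within[OF bounded_linear.continuous[OF bounded_linear_blinfun_scaleR_left]])
    then show "continuous (at (a, b) within ball a r \<times> ball b r) (\<lambda>(x, y). blinfun_scaleR_left (Gy (x, y)))"
      by (simp add: case_prod_beta')
  qed (use r in auto)
  then have "(G has_derivative (\<lambda>(tx, ty). tx *\<^sub>R Gx p + ty *\<^sub>R Gy p)) (at (a, b))"
    using at_within_open[OF pin opn] p by (simp add: case_prod_beta')
  then show ?thesis using p by (simp add: case_prod_beta')
qed

lemma line_deriv:
  fixes G :: "real\<times>real \<Rightarrow> complex"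
  assumes "(G has_derivative (\<lambda>v. fst v *\<^sub>R Gx + snd v *\<^sub>R Gy)) (at (x0 + t *\<^sub>R e))"
  shows "((\<lambda>t. G (x0 + t *\<^sub>R e)) has_vector_derivative (of_real (fst e) * Gx + of_real (snd e) * Gy)) (at t)"
proof -
  have l: "((\<lambda>t. x0 + t *\<^sub>R e) has_derivative (\<lambda>h. h *\<^sub>R e)) (at t)"
    by (auto intro!: derivative_eq_intros)
  have "((\<lambda>t. G (x0 + t *\<^sub>R e)) has_derivative (\<lambda>h. fst (h *\<^sub>R e) *\<^sub>R Gx + snd (h *\<^sub>R e) *\<^sub>R Gy)) (at t)"
    using has_derivative_compose[OF l assms] by simp
  moreover have "(\<lambda>h. fst (h *\<^sub>R e) *\<^sub>R Gx + snd (h *\<^sub>R e) *\<^sub>R Gy) = (\<lambda>h. h *\<^sub>R (of_real (fst e) * Gx + of_real (snd e) * Gy))"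
    by (auto simp: fun_eq_iff scaleR_conv_of_real algebra_simps)
  ultimately show ?thesis unfolding has_vector_derivative_def by simp
qed



lemma dops_append: "dops (bs @ cs) f = dops bs (dops cs f)"
  by (induction bs) auto

lemma smooth_dx:
  assumes "smooth2_on \<Omega> u" "q \<in> \<Omega>"
  shows "((\<lambda>t. dops bs u (t, snd q)) has_vector_derivative dops (True#bs) u q) (at (fst q))"
proof -
  have "(\<lambda>t. dops bs u (t, snd q)) differentiable (at (fst q))"
    using assms unfolding smooth2_on_def by blast
  then show ?thesis by (simp add: vector_derivative_works pdx_def)
qed

lemma smooth_dy:
  assumes "smooth2_on \<Omega> u" "q \<in> \<Omega>"
  shows "((\<lambda>t. dops bs u (fst q, t)) has_vector_derivative dops (False#bs) u q) (at (snd q))"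
proof -
  have "(\<lambda>t. dops bs u (fst q, t)) differentiable (at (snd q))"
    using assms unfolding smooth2_on_def by blast
  then show ?thesis by (simp add: vector_derivative_works pdy_def)
qed

lemma smooth_cont: "smooth2_on \<Omega> u \<Longrightarrow> continuous_on \<Omega> (dops bs u)"
  unfolding smooth2_on_def by blast

lemma smooth_frechet:
  assumes "open \<Omega>" "smooth2_on \<Omega> u" "p \<in> \<Omega>"
  shows "(dops bs u has_derivative (\<lambda>v. fst v *\<^sub>R dops (True#bs) u p + snd v *\<^sub>R dops (False#bs) u p)) (at p)"
proof (rule frechet2[OF assms(1,3)])
  show "continuous_on \<Omega> (dops (False # bs) u)" by (rule smooth_cont[OF assms(2)])
qed (use assms smooth_dx smooth_dy in auto)

lemma smooth_line:
  assumes "open \<Omega>" "smooth2_on \<Omega> u" "x0 + t *\<^sub>R e \<in> \<Omega>"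
  shows "((\<lambda>t. dops w u (x0 + t *\<^sub>R e)) has_vector_derivative
     (of_real (fst e) * dops (True#w) u (x0 + t *\<^sub>R e) + of_real (snd e) * dops (False#w) u (x0 + t *\<^sub>R e))) (at t)"
  by (rule line_deriv[OF smooth_frechet[OF assms]])

lemma smooth_clairaut:
  assumes "open \<Omega>" "smooth2_on \<Omega> u" "p \<in> \<Omega>"
  shows "dops (False#True#bs) u p = dops (True#False#bs) u p"
proof (rule clairaut[OF assms(1,3), where G="dops bs u" and Gx="dops (True#bs) u" and Gy="dops (False#bs) u"])
  fix q assume q: "q \<in> \<Omega>"
  show "((\<lambda>t. dops bs u (t, snd q)) has_vector_derivative dops (True # bs) u q) (at (fst q))"
    by (rule smooth_dx[OF assms(2) q])
  show "((\<lambda>t. dops bs u (fst q, t)) has_vector_derivative dops (False # bs) u q) (at (snd q))"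
    by (rule smooth_dy[OF assms(2) q])
  show "((\<lambda>t. dops (True # bs) u (fst q, t)) has_vector_derivative dops (False # True # bs) u q) (at (snd q))"
    by (rule smooth_dy[OF assms(2) q])
  show "((\<lambda>t. dops (False # bs) u (t, snd q)) has_vector_derivative dops (True # False # bs) u q) (at (fst q))"
    by (rule smooth_dx[OF assms(2) q])
next
  show "continuous_on \<Omega> (dops (False # True # bs) u)" by (rule smooth_cont[OF assms(2)])
  show "continuous_on \<Omega> (dops (True # False # bs) u)" by (rule smooth_cont[OF assms(2)])
qed

lemma vd_local:
  fixes F G :: "real \<Rightarrow> complex"
  assumes "open S" "x \<in> S" "\<And>y. y \<in> S \<Longrightarrow> F y = G y"
  shows "vector_derivative F (at x) = vector_derivative G (at x)"
proof -
  have "(F has_vector_derivative f') (at x) \<longleftrightarrow> (G has_vector_derivative f') (at x)" for f'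
    using has_vector_derivative_transform_within_open[OF _ assms(1,2), of F f' G]
          has_vector_derivative_transform_within_open[OF _ assms(1,2), of G f' F] assms(3)
    by auto
  then show ?thesis unfolding vector_derivative_def by simp
qed

lemma pd_local:
  assumes "open \<Omega>" "p \<in> \<Omega>" "\<And>q. q \<in> \<Omega> \<Longrightarrow> f q = g q"
  shows "pdx f p = pdx g p" "pdy f p = pdy g p"
proof -
  obtain r where r: "r > 0" "ball p r \<subseteq> \<Omega>" using assms open_contains_ball by blast
  have 1: "(t, snd p) \<in> \<Omega>" if "t \<in> ball (fst p) r" for t
  proof -
    have "dist (t, snd p) p = dist t (fst p)"
      by (cases p) (simp add: dist_Pair_Pair)
    then show ?thesis using that r by (auto simp: dist_commute)
  qed
  have 2: "(fst p, t) \<in> \<Omega>" if "t \<in> ball (snd p) r" for t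
  proof -
    have "dist (fst p, t) p = dist t (snd p)"
      by (cases p) (simp add: dist_Pair_Pair)
    then show ?thesis using that r by (auto simp: dist_commute)
  qed
  show "pdx f p = pdx g p" unfolding pdx_def
    by (rule vd_local[of "ball (fst p) r"]) (use r 1 assms(3) in auto)
  show "pdy f p = pdy g p" unfolding pdy_def
    by (rule vd_local[of "ball (snd p) r"]) (use r 2 assms(3) in auto)
qed

definition DD :: "(real \<times> real \<Rightarrow> complex) \<Rightarrow> nat \<Rightarrow> nat \<Rightarrow> real \<times> real \<Rightarrow> complex" where
  "DD u k m = dops (replicate k True @ replicate m False) u"

lemma pdy_DD:
  assumes "open \<Omega>" "smooth2_on \<Omega> u" "p \<in> \<Omega>"
  shows "dops (False # replicate k True @ replicate m False) u p = DD u k (Suc m) p"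
  using assms(3)
proof (induction k arbitrary: p)
  case 0
  then show ?case by (simp add: DD_def)
next
  case (Suc k)
  have "dops (False # replicate (Suc k) True @ replicate m False) u p
      = dops (True # False # replicate k True @ replicate m False) u p"
    using smooth_clairaut[OF assms(1,2) Suc.prems] by simp
  also have "\<dots> = pdx (dops (False # replicate k True @ replicate m False) u) p" by simp
  also have "\<dots> = pdx (DD u k (Suc m)) p"
    by (rule pd_local(1)[OF assms(1) Suc.prems]) (rule Suc.IH)
  also have "\<dots> = DD u (Suc k) (Suc m) p" by (simp add: DD_def)
  finally show ?case .
qed

lemma dops_comm:
  assumes "open \<Omega>" "smooth2_on \<Omega> u" "p \<in> \<Omega>"
  shows "dops w u p = DD u (length (filter id w)) (length (filter Not w)) p"
  using assms(3)
proof (induction w arbitrary: p)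
  case Nil
  then show ?case by (simp add: DD_def)
next
  case (Cons b w)
  show ?case
  proof (cases b)
    case True
    have "dops (b#w) u p = pdx (dops w u) p" using True by simp
    also have "\<dots> = pdx (DD u (length (filter id w)) (length (filter Not w))) p"
      by (rule pd_local(1)[OF assms(1) Cons.prems]) (rule Cons.IH)
    also have "\<dots> = DD u (length (filter id (b#w))) (length (filter Not (b#w))) p"
      using True by (simp add: DD_def)
    finally show ?thesis .
  next
    case False
    have "dops (b#w) u p = pdy (dops w u) p" using False by simp
    also have "\<dots> = pdy (DD u (length (filter id w)) (length (filter Not w))) p"
      by (rule pd_local(2)[OF assms(1) Cons.prems]) (rule Cons.IH)
    also have "\<dots> = dops (False # replicate (length (filter id w)) True @ replicate (length (filter Not w)) False) u p"
      by (simp add: DD_def)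
    also have "\<dots> = DD u (length (filter id (b#w))) (length (filter Not (b#w))) p"
      using pdy_DD[OF assms(1,2) Cons.prems] False by simp
    finally show ?thesis .
  qed
qed



definition words :: "nat \<Rightarrow> bool list set" where "words k = {w. length w = k}"
definition ecoef :: "real \<times> real \<Rightarrow> bool list \<Rightarrow> complex" where
  "ecoef e w = prod_list (map (\<lambda>b. of_real (if b then fst e else snd e)) w)"

lemma finite_words: "finite (words k)"
proof -
  have "words k = {w. set w \<subseteq> UNIV \<and> length w = k}" by (simp add: words_def)
  then show ?thesis using finite_lists_length_eq[of "UNIV :: bool set" k] by simp
qed

lemma words_0: "words 0 = {[]}" by (auto simp: words_def)

lemma words_Suc: "words (Suc k) = (\<lambda>w. True#w) ` words k \<union> (\<lambda>w. False#w) ` words k"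
proof
  show "words (Suc k) \<subseteq> (\<lambda>w. True#w) ` words k \<union> (\<lambda>w. False#w) ` words k"
  proof
    fix w assume "w \<in> words (Suc k)"
    then obtain b v where "w = b # v" "length v = k" by (auto simp: words_def length_Suc_conv)
    then show "w \<in> (\<lambda>w. True#w) ` words k \<union> (\<lambda>w. False#w) ` words k"
      by (cases b) (auto simp: words_def)
  qed
qed (auto simp: words_def)

lemma sum_words_Suc:
  "(\<Sum>w\<in>words (Suc k). f w) = (\<Sum>w\<in>words k. f (True#w)) + (\<Sum>w\<in>words k. f (False#w))"
proof -
  have "(\<Sum>w\<in>words (Suc k). f w) = (\<Sum>w\<in>(\<lambda>w. True#w) ` words k. f w) + (\<Sum>w\<in>(\<lambda>w. False#w) ` words k. f w)"
    unfolding words_Suc by (rule sum.union_disjoint) (auto simp: finite_words)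
  also have "\<dots> = (\<Sum>w\<in>words k. f (True#w)) + (\<Sum>w\<in>words k. f (False#w))"
    by (subst sum.reindex, simp add: inj_on_def)+ simp
  finally show ?thesis .
qed

lemma line_zero:
  fixes \<Phi> :: "bool list \<Rightarrow> real \<times> real \<Rightarrow> complex"
  assumes h: "h > 0"
   and deriv: "\<And>w t. t \<in> {0..h} \<Longrightarrow> ((\<lambda>t. \<Phi> w (x0 + t *\<^sub>R e)) has_vector_derivative
       (of_real (fst e) * \<Phi> (True#w) (x0 + t *\<^sub>R e) + of_real (snd e) * \<Phi> (False#w) (x0 + t *\<^sub>R e))) (at t)"
   and zero: "\<And>t. t \<in> {0..h} \<Longrightarrow> \<Phi> [] (x0 + t *\<^sub>R e) = 0"
  shows "(\<Sum>w\<in>words k. ecoef e w * \<Phi> w x0) = 0"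
proof -
  define F where "F k t = (\<Sum>w\<in>words k. ecoef e w * \<Phi> w (x0 + t *\<^sub>R e))" for k t
  have Fd: "(F k has_vector_derivative F (Suc k) t) (at t)" if t: "t \<in> {0..h}" for k t
  proof -
    have "(F k has_vector_derivative (\<Sum>w\<in>words k. ecoef e w *
        (of_real (fst e) * \<Phi> (True#w) (x0 + t *\<^sub>R e) + of_real (snd e) * \<Phi> (False#w) (x0 + t *\<^sub>R e)))) (at t)"
      unfolding F_def[abs_def]
      by (intro has_vector_derivative_sum has_vector_derivative_mult_right deriv t)
    moreover have "(\<Sum>w\<in>words k. ecoef e w *
        (of_real (fst e) * \<Phi> (True#w) (x0 + t *\<^sub>R e) + of_real (snd e) * \<Phi> (False#w) (x0 + t *\<^sub>R e)))
        = F (Suc k) t"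
      unfolding F_def sum_words_Suc by (simp add: ecoef_def algebra_simps sum.distrib)
    ultimately show ?thesis by simp
  qed
  have Fz: "\<forall>t\<in>{0<..<h}. F k t = 0"
  proof (induction k)
    case 0
    show ?case using zero by (auto simp: F_def words_0 ecoef_def)
  next
    case (Suc k)
    show ?case
    proof
      fix t assume t: "t \<in> {0<..<h}"
      have "((\<lambda>_. 0::complex) has_vector_derivative F (Suc k) t) (at t)"
        by (rule has_vector_derivative_transform_within_open[OF Fd[of t k], of "{0<..<h}"])
           (use t Suc.IH in auto)
      moreover have "((\<lambda>_. 0::complex) has_vector_derivative 0) (at t)" by simp
      ultimately show "F (Suc k) t = 0" using vector_derivative_unique_at by blast
    qed
  qed
  have "continuous (at 0) (F k)" using Fd[of 0 k] h by (intro has_vector_derivative_continuous) auto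
  then have "(F k \<longlongrightarrow> F k 0) (at_right 0)"
    by (simp add: continuous_at filterlim_at_split)
  moreover have "(F k \<longlongrightarrow> 0) (at_right 0)"
  proof (rule tendsto_eventually)
    show "\<forall>\<^sub>F t in at_right 0. F k t = 0"
      using eventually_at_right_real[OF h] by eventually_elim (use Fz in auto)
  qed
  ultimately have "F k 0 = 0" using tendsto_unique[OF trivial_limit_at_right_real] by blast
  then show ?thesis by (simp add: F_def)
qed



lemma pdx_lin:
  assumes "smooth2_on \<Omega> u" "p \<in> \<Omega>"
  shows "pdx (\<lambda>q. dops w1 u q + dops w2 u q + c * dops w3 u q) p
       = dops (True#w1) u p + dops (True#w2) u p + c * dops (True#w3) u p"
proof -
  have "((\<lambda>t. dops w1 u (t, snd p) + dops w2 u (t, snd p) + c * dops w3 u (t, snd p)) has_vector_derivative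
        (dops (True#w1) u p + dops (True#w2) u p + c * dops (True#w3) u p)) (at (fst p))"
    by (intro has_vector_derivative_add has_vector_derivative_mult_right smooth_dx[OF assms])
  then show ?thesis unfolding pdx_def by (simp add: vector_derivative_at)
qed

lemma pdy_lin:
  assumes "smooth2_on \<Omega> u" "p \<in> \<Omega>"
  shows "pdy (\<lambda>q. dops w1 u q + dops w2 u q + c * dops w3 u q) p
       = dops (False#w1) u p + dops (False#w2) u p + c * dops (False#w3) u p"
proof -
  have "((\<lambda>t. dops w1 u (fst p, t) + dops w2 u (fst p, t) + c * dops w3 u (fst p, t)) has_vector_derivative
        (dops (False#w1) u p + dops (False#w2) u p + c * dops (False#w3) u p)) (at (snd p))"
    by (intro has_vector_derivative_add has_vector_derivative_mult_right smooth_dy[OF assms])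
  then show ?thesis unfolding pdy_def by (simp add: vector_derivative_at)
qed

lemma pd_zero: "pdx (\<lambda>_. 0) p = 0" "pdy (\<lambda>_. 0) p = 0"
  unfolding pdx_def pdy_def by (simp_all add: vector_derivative_const_at)

lemma harmonic_DD:
  assumes om: "open \<Omega>" and sm: "smooth2_on \<Omega> u"
    and eq: "\<forall>p\<in>\<Omega>. - laplacian u p = of_real lam * u p"
  shows "\<forall>p\<in>\<Omega>. DD u (k+2) m p + DD u k (m+2) p + of_real lam * DD u k m p = 0"
proof -
  define H where "H k m = (\<lambda>q. DD u (k+2) m q + DD u k (m+2) q + of_real lam * DD u k m q)" for k m
  have Hx: "pdx (H k m) p = H (Suc k) m p" if p: "p \<in> \<Omega>" for k m p
    unfolding H_def DD_def by (subst pdx_lin[OF sm p]) simp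
  have Hy: "pdy (H k m) p = H k (Suc m) p" if p: "p \<in> \<Omega>" for k m p
  proof -
    have "pdy (H k m) p = dops (False # replicate (k+2) True @ replicate m False) u p
        + dops (False # replicate k True @ replicate (m+2) False) u p
        + of_real lam * dops (False # replicate k True @ replicate m False) u p"
      unfolding H_def DD_def by (rule pdy_lin[OF sm p])
    also have "\<dots> = H k (Suc m) p" unfolding H_def
      by (simp only: pdy_DD[OF om sm p]) (simp add: add.commute)
    finally show ?thesis .
  qed
  have H00: "\<forall>p\<in>\<Omega>. H 0 0 p = 0"
  proof
    fix p assume "p \<in> \<Omega>"
    then have "- (pdx (pdx u) p + pdy (pdy u) p) = of_real lam * u p" using eq by (simp add: laplacian_def)
    then have "pdx (pdx u) p + pdy (pdy u) p + of_real lam * u p = 0"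
      by (metis add.commute eq_neg_iff_add_eq_0)
    then show "H 0 0 p = 0" unfolding H_def DD_def by (simp add: numeral_2_eq_2 add.assoc)
  qed
  have H0m: "\<forall>p\<in>\<Omega>. H 0 m p = 0" for m
  proof (induction m)
    case 0 then show ?case using H00 by simp
  next
    case (Suc m)
    show ?case
    proof
      fix p assume p: "p \<in> \<Omega>"
      have "H 0 (Suc m) p = pdy (H 0 m) p" using Hy[OF p] by simp
      also have "\<dots> = pdy (\<lambda>_. 0) p" by (rule pd_local(2)[OF om p]) (use Suc.IH in auto)
      finally show "H 0 (Suc m) p = 0" by (simp add: pd_zero)
    qed
  qed
  have "\<forall>p\<in>\<Omega>. H k m p = 0" for k
  proof (induction k)
    case 0 then show ?case using H0m by simp
  next
    case (Suc k)
    show ?case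
    proof
      fix p assume p: "p \<in> \<Omega>"
      have "H (Suc k) m p = pdx (H k m) p" using Hx[OF p] by simp
      also have "\<dots> = pdx (\<lambda>_. 0) p" by (rule pd_local(1)[OF om p]) (use Suc.IH in auto)
      finally show "H (Suc k) m p = 0" by (simp add: pd_zero)
    qed
  qed
  then show ?thesis unfolding H_def by simp
qed

definition LL :: "complex \<Rightarrow> complex \<Rightarrow> complex \<Rightarrow> complex" where
  "LL A B z = A * of_real (Re z) + B * of_real (Im z)"

lemma LL_scale: "LL A B (of_real r * z) = of_real r * LL A B z"
  by (simp add: LL_def algebra_simps)

lemma LL_add: "LL A B (z1 + z2) = LL A B z1 + LL A B z2"
  by (simp add: LL_def algebra_simps)

lemma LL_minus: "LL A B (- z) = - LL A B z"
  by (simp add: LL_def algebra_simps)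

lemma LL_sum: "finite S \<Longrightarrow> LL A B (\<Sum>x\<in>S. f x) = (\<Sum>x\<in>S. LL A B (f x))"
  by (simp add: LL_def sum_distrib_left sum.distrib)

lemma sum_words_prod: "(\<Sum>w\<in>words n. prod_list (map (f::bool \<Rightarrow> 'a::comm_semiring_1) w)) = (f True + f False) ^ n"
proof (induction n)
  case 0 then show ?case by (simp add: words_0)
next
  case (Suc n)
  have 1: "(\<Sum>w\<in>words n. prod_list (map f (b#w))) = f b * (f True + f False) ^ n" for b
  proof -
    have "(\<Sum>w\<in>words n. prod_list (map f (b#w))) = (\<Sum>w\<in>words n. f b * prod_list (map f w))" by simp
    also have "\<dots> = f b * (\<Sum>w\<in>words n. prod_list (map f w))" by (rule sum_distrib_left[symmetric])
    finally show ?thesis using Suc.IH by simp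
  qed
  show ?case unfolding sum_words_Suc 1 by (simp add: distrib_right)
qed

lemma ecoef_real: "ecoef e w = of_real (prod_list (map (\<lambda>b. if b then fst e else snd e) w))"
  by (induction w) (auto simp: ecoef_def)

lemma ecoef_i: "ecoef e w * \<i> ^ length (filter Not w)
   = prod_list (map (\<lambda>b. if b then of_real (fst e) else \<i> * of_real (snd e)) w)"
  by (induction w) (auto simp: ecoef_def algebra_simps)

lemma words_LL:
  "(\<Sum>w\<in>words n. ecoef e w * LL A B (\<i> ^ length (filter Not w) * q))
     = LL A B ((of_real (fst e) + \<i> * of_real (snd e)) ^ n * q)"
proof -
  have "(\<Sum>w\<in>words n. ecoef e w * LL A B (\<i> ^ length (filter Not w) * q))
      = (\<Sum>w\<in>words n. LL A B (ecoef e w * \<i> ^ length (filter Not w) * q))"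
    by (intro sum.cong refl) (simp add: ecoef_real LL_scale[symmetric] mult.assoc)
  also have "\<dots> = LL A B (\<Sum>w\<in>words n. ecoef e w * \<i> ^ length (filter Not w) * q)"
    by (simp add: LL_sum finite_words)
  also have "(\<Sum>w\<in>words n. ecoef e w * \<i> ^ length (filter Not w) * q)
     = (\<Sum>w\<in>words n. prod_list (map (\<lambda>b. if b then of_real (fst e) else \<i> * of_real (snd e)) w)) * q"
    by (simp add: ecoef_i sum_distrib_right)
  also have "\<dots> = (of_real (fst e) + \<i> * of_real (snd e)) ^ n * q"
    by (simp add: sum_words_prod)
  finally show ?thesis .
qed

lemma final_alg:
  assumes z: "\<zeta> \<noteq> 0" and h1: "LL A B (\<i> * \<zeta>) = 0" and h2: "LL A B (cis \<phi> * \<zeta>) = 0"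
    and c: "cos \<phi> \<noteq> 0"
  shows "A = 0 \<and> B = 0"
proof -
  have "cis \<phi> * \<zeta> = of_real (cos \<phi>) * \<zeta> + of_real (sin \<phi>) * (\<i> * \<zeta>)"
    by (simp add: cis.ctr Complex_eq algebra_simps)
  then have "LL A B (cis \<phi> * \<zeta>) = of_real (cos \<phi>) * LL A B \<zeta> + of_real (sin \<phi>) * LL A B (\<i> * \<zeta>)"
    by (simp add: LL_add LL_scale)
  then have "of_real (cos \<phi>) * LL A B \<zeta> = 0" using h1 h2 by simp
  then have l1: "LL A B \<zeta> = 0" using c by simp
  define a where "a = Re \<zeta>"
  define b where "b = Im \<zeta>"
  have e1: "A * of_real a + B * of_real b = 0" using l1 by (simp add: LL_def a_def b_def)
  have e2: "- A * of_real b + B * of_real a = 0" using h1 by (simp add: LL_def a_def b_def)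
  have nz: "of_real (a^2 + b^2) \<noteq> (0::complex)" using z
    by (simp add: a_def b_def complex_eq_iff)
  have "A * of_real (a^2 + b^2) = of_real a * (A * of_real a + B * of_real b) - of_real b * (- A * of_real b + B * of_real a)"
    by (simp add: algebra_simps power2_eq_square)
  then have "A * of_real (a^2 + b^2) = 0" using e1 e2 by simp
  then have A: "A = 0" using nz by simp
  have "B * of_real (a^2 + b^2) = of_real b * (A * of_real a + B * of_real b) + of_real a * (- A * of_real b + B * of_real a)"
    by (simp add: algebra_simps power2_eq_square)
  then have "B * of_real (a^2 + b^2) = 0" using e1 e2 by simp
  then have "B = 0" using nz by simp
  with A show ?thesis by simp
qed



lemma cTF: "length (filter id w) + length (filter Not w) = length w"
  by (induction w) auto

theorem theorem4p2:
  fixes \<Omega> :: "(real \<times> real) set" and u :: "real \<times> real \<Rightarrow> complex"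
    and lam h \<alpha> :: real and x0 em ep :: "real \<times> real" and C1 :: complex
  assumes "open \<Omega>" and "lam > 0"
    and "smooth2_on \<Omega> u"
    and "(\<lambda>x. (cmod (u x))\<^sup>2) integrable_on \<Omega>"
    and "\<forall>p\<in>\<Omega>. - laplacian u p = of_real lam * u p"
    and "x0 \<in> \<Omega>" and "h > 0"
    and "norm em = 1"
    and "0 < \<alpha>" and "\<alpha> < 2" and "\<alpha> \<notin> \<rat>"
    and "ep = rotate (\<alpha> * pi) em"
    and "segment_from x0 em h \<subseteq> \<Omega>" and "segment_from x0 ep h \<subseteq> \<Omega>"
    and "C1 \<noteq> 0"
    and "gen_singular_line u (segment_from x0 em h) (rot90 em) (\<lambda>_. C1)"
    and "\<forall>p\<in>segment_from x0 ep h. u p = 0"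
  shows "Vani u x0 = \<infinity>"
proof -
  note om = assms(1) and sm = assms(3) and lap = assms(5) and x0in = assms(6) and h = assms(7)
  note nem = assms(8) and airr = assms(11) and epd = assms(12) and seg1 = assms(13) and seg2 = assms(14)
  note sing = assms(16) and nod = assms(17)
  have inseg: "x0 + t *\<^sub>R e \<in> segment_from x0 e h" if "t \<in> {0..h}" for t e
    using that by (auto simp: segment_from_def)
  have segm1: "x0 + t *\<^sub>R em \<in> \<Omega>" if "t \<in> {0..h}" for t using inseg[OF that, of em] seg1 by blast
  have segm2: "x0 + t *\<^sub>R ep \<in> \<Omega>" if "t \<in> {0..h}" for t using inseg[OF that, of ep] seg2 by blast
  define zm where "zm = of_real (fst em) + \<i> * of_real (snd em)"
  define zp where "zp = of_real (fst ep) + \<i> * of_real (snd ep)"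
  have zpm: "zp = cis (\<alpha> * pi) * zm"
    by (simp add: zp_def zm_def epd rotate_def complex_eq_iff cis.sel)
  have zm0: "zm \<noteq> 0"
  proof
    assume "zm = 0"
    then have "fst em = 0" "snd em = 0" by (simp_all add: zm_def complex_eq_iff)
    then have "em = 0" by (simp add: prod_eq_iff)
    then show False using nem by simp
  qed
  have main: "\<forall>k\<le>N. DD u k (N-k) x0 = 0" for N
  proof (induction N rule: less_induct)
    case (less N)
    have low: "dops w u x0 = 0" if "length w < N" for w
    proof -
      have "dops w u x0 = DD u (length (filter id w)) (length (filter Not w)) x0"
        by (rule dops_comm[OF om sm x0in])
      also have "length (filter Not w) = length w - length (filter id w)" using cTF[of w] by simp
      finally show ?thesis using less.IH[OF that] cTF[of w] by (metis le_add1)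
    qed
    have nodal: "(\<Sum>w\<in>words N. ecoef ep w * dops w u x0) = 0"
    proof (rule line_zero[where \<Phi>="\<lambda>w. dops w u", OF h])
      fix w t assume t: "t \<in> {0..h}"
      show "((\<lambda>t. dops w u (x0 + t *\<^sub>R ep)) has_vector_derivative
         of_real (fst ep) * dops (True # w) u (x0 + t *\<^sub>R ep) + of_real (snd ep) * dops (False # w) u (x0 + t *\<^sub>R ep)) (at t)"
        by (rule smooth_line[OF om sm segm2[OF t]])
    next
      fix t assume t: "t \<in> {0..h}"
      show "dops [] u (x0 + t *\<^sub>R ep) = 0" using nod inseg[OF t] by simp
    qed
    show ?case
    proof (cases "N = 0")
      case True
      have "u x0 = 0" using nod inseg[of 0 ep] h by simp
      then show ?thesis using True by (simp add: DD_def)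
    next
      case False
      define A where "A = DD u N 0 x0"
      define B where "B = DD u (N-1) 1 x0"
      have rep: "\<forall>j\<le>N. DD u (N-j) j x0 = LL A B (\<i>^j)"
      proof (intro allI impI)
        fix j assume "j \<le> N"
        then show "DD u (N-j) j x0 = LL A B (\<i>^j)"
        proof (induction j rule: less_induct)
          case (less j)
          show ?case
          proof (cases "j \<le> 1")
            case True
            then have "j = 0 \<or> j = 1" by auto
            then show ?thesis by (auto simp: A_def B_def LL_def)
          next
            case False
            define i where "i = j - 2"
            have j: "j = i + 2" using False by (simp add: i_def)
            have H: "DD u (N-j+2) i x0 + DD u (N-j) (i+2) x0 + of_real lam * DD u (N-j) i x0 = 0"
              using harmonic_DD[OF om sm lap, of "N-j" i] x0in by simp
            have low2: "DD u (N-j) i x0 = 0"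
            proof -
              have "N - 2 < N" using \<open>N \<noteq> 0\<close> by simp
              then have "\<forall>k\<le>N-2. DD u k (N-2-k) x0 = 0" by (rule \<open>\<And>y. y < N \<Longrightarrow> \<forall>k\<le>y. DD u k (y - k) x0 = 0\<close>)
              moreover have "N - j \<le> N - 2" using j by simp
              ultimately have "DD u (N-j) (N-2-(N-j)) x0 = 0" by blast
              moreover have "N - 2 - (N - j) = i" using less.prems j by simp
              ultimately show ?thesis by simp
            qed
            have IHi: "DD u (N-i) i x0 = LL A B (\<i>^i)" using less.IH[of i] less.prems j by simp
            have "N - j + 2 = N - i" using less.prems j by simp
            then have "DD u (N-j) j x0 = - LL A B (\<i>^i)" using H low2 IHi j
              by (simp add: eq_neg_iff_add_eq_0 add.commute)
            also have "\<dots> = LL A B (\<i>^j)" by (simp add: j LL_minus[symmetric] power_add)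
            finally show ?thesis .
          qed
        qed
      qed
      have repw: "dops w u x0 = LL A B (\<i> ^ length (filter Not w))" if "w \<in> words N" for w
      proof -
        have lw: "length w = N" using that by (simp add: words_def)
        have "dops w u x0 = DD u (length (filter id w)) (length (filter Not w)) x0"
          by (rule dops_comm[OF om sm x0in])
        also have "length (filter id w) = N - length (filter Not w)" using cTF[of w] lw by simp
        finally show ?thesis using rep cTF[of w] lw by (metis le_add2)
      qed
      have nod2: "LL A B (zp ^ N) = 0"
      proof -
        have "LL A B (zp ^ N) = (\<Sum>w\<in>words N. ecoef ep w * LL A B (\<i> ^ length (filter Not w)))"
          using words_LL[where n=N and e=ep and A=A and B=B and q=1] by (simp add: zp_def)
        also have "\<dots> = (\<Sum>w\<in>words N. ecoef ep w * dops w u x0)"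
          by (rule sum.cong) (simp_all add: repw)
        finally show ?thesis using nodal by simp
      qed
      define \<nu> where "\<nu> = rot90 em"
      define \<Phi> where "\<Phi> w q = of_real (fst \<nu>) * dops (w @ [True]) u q + of_real (snd \<nu>) * dops (w @ [False]) u q + C1 * dops w u q" for w q
      have sing0: "(\<Sum>w\<in>words (N-1). ecoef em w * \<Phi> w x0) = 0"
      proof (rule line_zero[where \<Phi>="\<Phi>", OF h])
        fix w t assume t: "t \<in> {0..h}"
        note d = smooth_line[OF om sm segm1[OF t]]
        let ?q = "x0 + t *\<^sub>R em"
        have "((\<lambda>t. \<Phi> w (x0 + t *\<^sub>R em)) has_vector_derivative
           of_real (fst \<nu>) * (of_real (fst em) * dops (True # w @ [True]) u ?q + of_real (snd em) * dops (False # w @ [True]) u ?q)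
         + of_real (snd \<nu>) * (of_real (fst em) * dops (True # w @ [False]) u ?q + of_real (snd em) * dops (False # w @ [False]) u ?q)
         + C1 * (of_real (fst em) * dops (True # w) u ?q + of_real (snd em) * dops (False # w) u ?q)) (at t)"
          unfolding \<Phi>_def
          by (intro has_vector_derivative_add has_vector_derivative_mult_right d)
        moreover have "of_real (fst \<nu>) * (of_real (fst em) * dops (True # w @ [True]) u ?q + of_real (snd em) * dops (False # w @ [True]) u ?q)
         + of_real (snd \<nu>) * (of_real (fst em) * dops (True # w @ [False]) u ?q + of_real (snd em) * dops (False # w @ [False]) u ?q)
         + C1 * (of_real (fst em) * dops (True # w) u ?q + of_real (snd em) * dops (False # w) u ?q)
         = of_real (fst em) * \<Phi> (True # w) ?q + of_real (snd em) * \<Phi> (False # w) ?q"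
          unfolding \<Phi>_def by (simp add: algebra_simps)
        ultimately show "((\<lambda>t. \<Phi> w (x0 + t *\<^sub>R em)) has_vector_derivative
           of_real (fst em) * \<Phi> (True # w) ?q + of_real (snd em) * \<Phi> (False # w) ?q) (at t)"
          by simp
      next
        fix t assume t: "t \<in> {0..h}"
        show "\<Phi> [] (x0 + t *\<^sub>R em) = 0"
          using sing inseg[OF t] unfolding gen_singular_line_def normal_deriv_def \<Phi>_def \<nu>_def by simp
      qed
      have \<Phi>x0: "\<Phi> w x0 = LL A B (\<i> ^ length (filter Not w) * (of_real (fst \<nu>) + \<i> * of_real (snd \<nu>)))"
        if "w \<in> words (N-1)" for w
      proof -
        have lw: "length w < N" "w @ [True] \<in> words N" "w @ [False] \<in> words N"
          using that \<open>N \<noteq> 0\<close> by (auto simp: words_def)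
        have "\<Phi> w x0 = of_real (fst \<nu>) * LL A B (\<i> ^ length (filter Not w))
            + of_real (snd \<nu>) * LL A B (\<i> ^ length (filter Not w) * \<i>)"
          unfolding \<Phi>_def using low[OF lw(1)] repw[OF lw(2)] repw[OF lw(3)] by (simp add: mult.commute)
        also have "\<dots> = LL A B (\<i> ^ length (filter Not w) * (of_real (fst \<nu>) + \<i> * of_real (snd \<nu>)))"
          by (simp add: LL_add LL_scale[symmetric] algebra_simps)
        finally show ?thesis .
      qed
      have sing2: "LL A B (\<i> * zm ^ N) = 0"
      proof -
        have "(\<Sum>w\<in>words (N-1). ecoef em w * LL A B (\<i> ^ length (filter Not w) * (of_real (fst \<nu>) + \<i> * of_real (snd \<nu>)))) = 0"
        proof -
          have "(\<Sum>w\<in>words (N-1). ecoef em w * LL A B (\<i> ^ length (filter Not w) * (of_real (fst \<nu>) + \<i> * of_real (snd \<nu>)))) = (\<Sum>w\<in>words (N-1). ecoef em w * \<Phi> w x0)"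
            by (rule sum.cong) (simp_all add: \<Phi>x0)
          then show ?thesis using sing0 by simp
        qed
        then have "LL A B (zm ^ (N-1) * (of_real (fst \<nu>) + \<i> * of_real (snd \<nu>))) = 0"
          by (simp only: words_LL zm_def)
        moreover have "of_real (fst \<nu>) + \<i> * of_real (snd \<nu>) = \<i> * zm"
          by (simp add: \<nu>_def rot90_def zm_def complex_eq_iff)
        moreover have "zm ^ (N-1) * (\<i> * zm) = \<i> * zm ^ N"
        proof -
          have "zm ^ (N-1) * (\<i> * zm) = \<i> * (zm ^ (N-1) * zm)" by (simp only: mult.left_commute)
          then show ?thesis using power_minus_mult[of N zm] \<open>N \<noteq> 0\<close> by simp
        qed
        ultimately show ?thesis by metis
      qed
      have nod3: "LL A B (cis (real N * (\<alpha> * pi)) * zm ^ N) = 0"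
      proof -
        have "zp ^ N = cis (real N * (\<alpha> * pi)) * zm ^ N" by (simp only: zpm power_mult_distrib Complex.DeMoivre)
        then show ?thesis using nod2 by simp
      qed
      have cosnz: "cos (real N * (\<alpha> * pi)) \<noteq> 0"
      proof
        assume "cos (real N * (\<alpha> * pi)) = 0"
        then obtain x :: int where x: "real N * (\<alpha> * pi) = of_int x * pi + pi / 2"
          by (auto simp: cos_zero_iff_int2)
        then have "real N * \<alpha> * pi = (of_int x + 1/2) * pi" by (simp add: algebra_simps)
        then have "real N * \<alpha> = of_int x + 1/2" by simp
        then have "\<alpha> = (of_int (2*x+1)) / (of_nat (2*N))" using \<open>N \<noteq> 0\<close>
          by (simp add: field_simps)
        then have "\<alpha> \<in> \<rat>" by (simp add: Rats_divide)
        then show False using airr by simp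
      qed
      have AB: "A = 0 \<and> B = 0"
        by (rule final_alg[OF _ sing2 nod3 cosnz]) (use zm0 in simp)
      show ?thesis
      proof (intro allI impI)
        fix k assume "k \<le> N"
        then have "DD u (N - (N-k)) (N-k) x0 = LL A B (\<i>^(N-k))" using rep by (meson diff_le_self)
        moreover have "N - (N-k) = k" using \<open>k \<le> N\<close> by simp
        ultimately have "DD u k (N-k) x0 = LL A B (\<i>^(N-k))" by simp
        then show "DD u k (N-k) x0 = 0" using AB by (simp add: LL_def)
      qed
    qed
  qed
  have "taylor_hterm u x0 N = (\<lambda>_. 0)" for N
  proof
    fix z :: "real \<times> real"
    obtain x y where z: "z = (x,y)" by (cases z)
    have "dops (replicate j True @ replicate (N - j) False) u x0 = 0" if "j \<le> N" for j
      using main[of N] that by (simp add: DD_def)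
    then show "taylor_hterm u x0 N z = 0" unfolding taylor_hterm_def z by simp
  qed
  then show ?thesis unfolding Vani_def by simp
qed

end
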